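(* Let $\bar V$ be a finite node set. Let $S_q,S'_q\in\mathbb R^{\bar V}$, $T_0>0$, $\epsilon_p>0$, $0<\eta\le1$, and let $p=\operatorname{softmax}(S_q/T_0)$, $p'=\operatorname{softmax}(S'_q/T_0)$, $a_v=(p_v+\epsilon_p)^\eta$, $a'_v=(p'_v+\epsilon_p)^\eta$. Let $u_q\in\mathbb R^d$, let $W_x$ be a $d\times d_x$ matrix, and let $x_v,x'_v\in\mathbb R^{d_x}$ for $v\in\bar V$. Define $h_v^{(0)}=a_vu_q+W_xx_v$ and $h_v'^{(0)}=a'_vu_q+W_xx'_v$. Then $$\max_{v\in\bar V}\|h^{(0)}_v-h'^{(0)}_v\|_2\le C_{\mathrm{init}}(\Delta_{\mathrm{seed}}+\Delta_X),\qquad C_{\mathrm{init}}=\frac{\eta\epsilon_p^{\eta-1}}{T_0}\|u_q\|_2+\|W_x\|_2,$$ where $\Delta_{\mathrm{seed}}=\|S_q-S'_q\|_\infty$ and $\Delta_X=\max_{v}\|x_v-x'_v\|_2$.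
   Context: $\|W_x\|_2$ is the spectral norm. In the paper the two primed/unprimed quantities come from two consecutive memory graphs aligned on a common node universe $\bar V$ (nodes absent from one graph are padded as isolated nodes), $S_q$ are query-conditioned entry scores, and $h^{(0)}$ are initial node representations of a graph reader. *)

theory Defs
  imports "HOL-Analysis.Analysis"
begin

definition softmax :: "'v set \<Rightarrow> real \<Rightarrow> ('v \<Rightarrow> real) \<Rightarrow> 'v \<Rightarrow> real" where
  "softmax V T S v = exp (S v / T) / (\<Sum>u\<in>V. exp (S u / T))"

definition spec_norm :: "real^'n^'m \<Rightarrow> real" where
  "spec_norm W = onorm (\<lambda>x. W *v x)"

end

theory Submission
  imports Defs
begin

lemma lip_deriv:
  fixes f f' :: "real \<Rightarrow> real"
  assumes der: "\<And>x. min a b \<le> x \<Longrightarrow> x \<le> max a b \<Longrightarrow> DERIV f x :> f' x"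
    and bd: "\<And>x. min a b \<le> x \<Longrightarrow> x \<le> max a b \<Longrightarrow> \<bar>f' x\<bar> \<le> K"
  shows "\<bar>f a - f b\<bar> \<le> K * \<bar>a - b\<bar>"
proof -
  have *: "\<bar>f y - f x\<bar> \<le> K * \<bar>y - x\<bar>" if h1: "x < y" and h2: "\<And>t. x \<le> t \<Longrightarrow> t \<le> y \<Longrightarrow> DERIV f t :> f' t"
     and h3: "\<And>t. x \<le> t \<Longrightarrow> t \<le> y \<Longrightarrow> \<bar>f' t\<bar> \<le> K" for x y
  proof -
    obtain z where z: "x < z" "z < y" "f y - f x = (y - x) * f' z" using MVT2[OF h1 h2] by blast
    have "\<bar>f y - f x\<bar> = \<bar>y - x\<bar> * \<bar>f' z\<bar>" by (simp add: z(3) abs_mult)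
    also have "\<dots> \<le> \<bar>y - x\<bar> * K" using h3[of z] z by (intro mult_left_mono) auto
    finally show ?thesis by (simp add: mult.commute)
  qed
  consider "a < b" | "a = b" | "b < a" by linarith
  then show ?thesis
  proof cases
    case 1 then show ?thesis using *[of a b] der bd by (simp add: abs_minus_commute)
  next
    case 2 then show ?thesis by simp
  next
    case 3 then show ?thesis using *[of b a] der bd by simp
  qed
qed

definition sig :: "real \<Rightarrow> real" where "sig x = 1 / (1 + exp (- x))"

lemma sig_lip: "\<bar>sig a - sig b\<bar> \<le> \<bar>a - b\<bar> / 4"
proof -
  have d: "DERIV sig x :> exp (-x) / (1 + exp (-x))^2" for x :: real
  proof -
    have ne: "1 + exp (-x) \<noteq> 0" by (smt (verit) exp_gt_zero)
    show ?thesis unfolding sig_def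
      by (auto intro!: derivative_eq_intros simp: ne power2_eq_square)
  qed
  have b: "\<bar>exp (-x) / (1 + exp (-x))^2\<bar> \<le> 1/4" for x :: real
  proof -
    define t where "t = exp (-x)"
    have t: "t > 0" unfolding t_def by simp
    have "4 * t \<le> (1 + t)^2" using sum_squares_ge_zero[of "1 - t" 0]
      by (simp add: power2_eq_square algebra_simps)
    then show ?thesis using t unfolding t_def[symmetric] by (simp add: field_simps)
  qed
  show ?thesis using lip_deriv[of a b sig "\<lambda>x. exp (-x) / (1 + exp (-x))^2" "1/4", OF d b] by simp
qed

lemma sig_lip2: "\<bar>a - b\<bar> \<le> 2 * d \<Longrightarrow> \<bar>sig a - sig b\<bar> \<le> d / 2"
proof -
  assume h: "\<bar>a - b\<bar> \<le> 2 * d"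
  have "\<bar>a - b\<bar> / 4 \<le> d / 2" using h by simp
  then show ?thesis using sig_lip[of a b] by (rule_tac order_trans) auto
qed

lemma powr_lip:
  fixes p q eps eta :: real
  assumes "p \<ge> 0" "q \<ge> 0" "eps > 0" "0 < eta" "eta \<le> 1"
  shows "\<bar>(p + eps) powr eta - (q + eps) powr eta\<bar> \<le> eta * eps powr (eta - 1) * \<bar>p - q\<bar>"
proof -
  have "\<bar>(\<lambda>t. (t + eps) powr eta) p - (\<lambda>t. (t + eps) powr eta) q\<bar> \<le> eta * eps powr (eta - 1) * \<bar>p - q\<bar>"
  proof (rule lip_deriv[where f' = "\<lambda>t. eta * (t + eps) powr (eta - 1)"])
    fix t assume t: "min p q \<le> t" "t \<le> max p q"
    then have tp: "t + eps > 0" using assms by linarith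
    show "DERIV (\<lambda>t. (t + eps) powr eta) t :> eta * (t + eps) powr (eta - 1)"
      using tp by (auto intro!: derivative_eq_intros)
    have "(t + eps) powr (eta - 1) \<le> eps powr (eta - 1)"
      using t assms by (intro powr_mono2') auto
    then show "\<bar>eta * (t + eps) powr (eta - 1)\<bar> \<le> eta * eps powr (eta - 1)"
      using assms by (simp add: abs_mult)
  qed
  then show ?thesis by simp
qed

lemma softmax_sig:
  assumes "finite V" "v \<in> V" "V - {v} \<noteq> {}"
  shows "softmax V T S v = sig (S v / T - ln (\<Sum>u\<in>V - {v}. exp (S u / T)))"
proof -
  define R where "R = (\<Sum>u\<in>V - {v}. exp (S u / T))"
  have R: "R > 0" unfolding R_def using assms by (intro sum_pos) auto
  have sum: "(\<Sum>u\<in>V. exp (S u / T)) = exp (S v / T) + R"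
    unfolding R_def using assms by (simp add: sum.remove)
  have e: "exp (- (S v / T - ln R)) = R / exp (S v / T)"
    using R by (simp add: exp_diff)
  have "exp (S v / T) / (exp (S v / T) + R) = 1 / (1 + R / exp (S v / T))"
    using R by (simp add: field_simps add_pos_pos)
  then show ?thesis unfolding softmax_def sig_def R_def[symmetric] sum e .
qed

lemma lnsum_lip:
  assumes "finite A" "A \<noteq> {}" "\<And>u. u \<in> A \<Longrightarrow> \<bar>z u - z' u\<bar> \<le> (d::real)"
  shows "ln (\<Sum>u\<in>A. exp (z' u)) \<le> d + ln (\<Sum>u\<in>A. exp (z u))"
proof -
  have "(\<Sum>u\<in>A. exp (z' u)) \<le> (\<Sum>u\<in>A. exp d * exp (z u))"
  proof (rule sum_mono)
    fix u assume "u \<in> A"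
    then have "z' u \<le> d + z u" using assms(3) by force
    then show "exp (z' u) \<le> exp d * exp (z u)" by (simp flip: exp_add)
  qed
  also have "\<dots> = exp d * (\<Sum>u\<in>A. exp (z u))" by (simp add: sum_distrib_left)
  finally have le: "(\<Sum>u\<in>A. exp (z' u)) \<le> exp d * (\<Sum>u\<in>A. exp (z u))" .
  have p1: "(\<Sum>u\<in>A. exp (z' u)) > 0" and p2: "(\<Sum>u\<in>A. exp (z u)) > 0"
    using assms by (auto intro!: sum_pos)
  have "ln (\<Sum>u\<in>A. exp (z' u)) \<le> ln (exp d * (\<Sum>u\<in>A. exp (z u)))"
    using le p1 p2 by (subst ln_le_cancel_iff) auto
  also have "\<dots> = d + ln (\<Sum>u\<in>A. exp (z u))" using p2 by (simp add: ln_mult)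
  finally show ?thesis .
qed

lemma softmax_lip:
  assumes "finite V" "v \<in> V" "\<And>u. u \<in> V \<Longrightarrow> \<bar>S u / T - S' u / T\<bar> \<le> d"
  shows "\<bar>softmax V T S v - softmax V T S' v\<bar> \<le> d / 2"
proof (cases "V - {v} = {}")
  case True
  then have V: "V = {v}" using assms(2) by auto
  have "d \<ge> 0" using assms(3)[OF assms(2)] by linarith
  then show ?thesis unfolding V softmax_def by simp
next
  case False
  define A where "A = V - {v}"
  have A: "finite A" "A \<noteq> {}" using False assms(1) unfolding A_def by auto
  have h: "\<And>u. u \<in> A \<Longrightarrow> \<bar>S u / T - S' u / T\<bar> \<le> d" using assms(3) unfolding A_def by auto
  have h': "\<And>u. u \<in> A \<Longrightarrow> \<bar>S' u / T - S u / T\<bar> \<le> d" using h by (simp add: abs_minus_commute)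
  have l1: "ln (\<Sum>u\<in>A. exp (S' u / T)) \<le> d + ln (\<Sum>u\<in>A. exp (S u / T))"
    by (rule lnsum_lip[OF A h])
  have l2: "ln (\<Sum>u\<in>A. exp (S u / T)) \<le> d + ln (\<Sum>u\<in>A. exp (S' u / T))"
    by (rule lnsum_lip[OF A h'])
  have v: "\<bar>S v / T - S' v / T\<bar> \<le> d" using assms by auto
  have "\<bar>(S v / T - ln (\<Sum>u\<in>A. exp (S u / T))) - (S' v / T - ln (\<Sum>u\<in>A. exp (S' u / T)))\<bar> \<le> 2 * d"
    using l1 l2 v by linarith
  then have "\<bar>sig (S v / T - ln (\<Sum>u\<in>A. exp (S u / T))) - sig (S' v / T - ln (\<Sum>u\<in>A. exp (S' u / T)))\<bar> \<le> d / 2"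
    by (rule sig_lip2)
  then show ?thesis
    using softmax_sig[OF assms(1,2) False, of T S] softmax_sig[OF assms(1,2) False, of T S']
    unfolding A_def by simp
qed

theorem lemma4p9:
  fixes V :: "'v set"
    and S S' :: "'v \<Rightarrow> real"
    and T0 eps eta :: real
    and u :: "real^'d"
    and W :: "real^'x^'d"
    and x x' :: "'v \<Rightarrow> real^'x"
  assumes "finite V" and "V \<noteq> {}"
    and "T0 > 0" and "eps > 0" and "0 < eta" and "eta \<le> 1"
  shows
    "(let p = softmax V T0 S; p' = softmax V T0 S';
          a = (\<lambda>v. (p v + eps) powr eta); a' = (\<lambda>v. (p' v + eps) powr eta);
          h = (\<lambda>v. a v *\<^sub>R u + W *v x v); h' = (\<lambda>v. a' v *\<^sub>R u + W *v x' v);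
          C = eta * eps powr (eta - 1) / T0 * norm u + spec_norm W;
          \<Delta>seed = Max ((\<lambda>v. \<bar>S v - S' v\<bar>) ` V);
          \<Delta>X = Max ((\<lambda>v. norm (x v - x' v)) ` V)
      in Max ((\<lambda>v. norm (h v - h' v)) ` V) \<le> C * (\<Delta>seed + \<Delta>X))"
proof -
  define Ds where "Ds = Max ((\<lambda>v. \<bar>S v - S' v\<bar>) ` V)"
  define DX where "DX = Max ((\<lambda>v. norm (x v - x' v)) ` V)"
  define K where "K = eta * eps powr (eta - 1)"
  have K0: "K \<ge> 0" unfolding K_def using assms by simp
  have sn0: "spec_norm W \<ge> 0" unfolding spec_norm_def
    by (rule onorm_pos_le) simp
  have Ds: "\<bar>S v - S' v\<bar> \<le> Ds" if "v \<in> V" for v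
    unfolding Ds_def using assms(1) that by (intro Max_ge) auto
  have DX: "norm (x v - x' v) \<le> DX" if "v \<in> V" for v
    unfolding DX_def using assms(1) that by (intro Max_ge) auto
  obtain v0 where v0: "v0 \<in> V" using assms(2) by blast
  have Ds0: "Ds \<ge> 0" using Ds[OF v0] by linarith
  have DX0: "DX \<ge> 0" using DX[OF v0] norm_ge_zero[of "x v0 - x' v0"] by linarith
  have sm_nonneg: "softmax V T0 R v \<ge> 0" for R v
    unfolding softmax_def by (intro divide_nonneg_nonneg sum_nonneg) auto
  have key: "norm (((softmax V T0 S v + eps) powr eta *\<^sub>R u + W *v x v)
      - ((softmax V T0 S' v + eps) powr eta *\<^sub>R u + W *v x' v))
      \<le> (K / T0 * norm u + spec_norm W) * (Ds + DX)" if v: "v \<in> V" for v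
  proof -
    have sd: "\<bar>S w / T0 - S' w / T0\<bar> \<le> Ds / T0" if "w \<in> V" for w
    proof -
      have "\<bar>S w / T0 - S' w / T0\<bar> = \<bar>S w - S' w\<bar> / T0"
        using assms(3) by (simp add: diff_divide_distrib[symmetric])
      then show ?thesis using Ds[OF that] assms(3) by (simp add: divide_right_mono)
    qed
    have p: "\<bar>softmax V T0 S v - softmax V T0 S' v\<bar> \<le> Ds / T0"
    proof -
      have "Ds / T0 \<ge> 0" using Ds0 assms(3) by simp
      have f1: "\<bar>softmax V T0 S v - softmax V T0 S' v\<bar> \<le> Ds / T0 / 2"
        by (rule softmax_lip[OF assms(1) v], erule sd)
      have f2: "Ds / T0 / 2 \<le> Ds / T0" using \<open>Ds / T0 \<ge> 0\<close> by simp
      show ?thesis by (rule order_trans[OF f1 f2])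
    qed
    define da where "da = (softmax V T0 S v + eps) powr eta - (softmax V T0 S' v + eps) powr eta"
    have da: "\<bar>da\<bar> \<le> K * (Ds / T0)"
      unfolding da_def
      using powr_lip[OF sm_nonneg[of S v] sm_nonneg[of S' v] assms(4,5,6)] mult_left_mono[OF p K0]
      unfolding K_def by linarith
    have eq: "((softmax V T0 S v + eps) powr eta *\<^sub>R u + W *v x v)
      - ((softmax V T0 S' v + eps) powr eta *\<^sub>R u + W *v x' v) = da *\<^sub>R u + W *v (x v - x' v)"
      unfolding da_def by (simp add: algebra_simps matrix_vector_mult_diff_distrib scaleR_diff_left)
    have "norm (da *\<^sub>R u + W *v (x v - x' v)) \<le> \<bar>da\<bar> * norm u + spec_norm W * norm (x v - x' v)"
      using norm_triangle_ineq[of "da *\<^sub>R u" "W *v (x v - x' v)"]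
        onorm[OF matrix_vector_mul_bounded_linear[of W], of "x v - x' v"]
      unfolding spec_norm_def by simp
    also have "\<dots> \<le> K * (Ds / T0) * norm u + spec_norm W * DX"
      using mult_right_mono[OF da norm_ge_zero[of u]] mult_left_mono[OF DX[OF v] sn0] by linarith
    also have "\<dots> \<le> K / T0 * norm u * (Ds + DX) + spec_norm W * (Ds + DX)"
    proof (rule add_mono)
      have c: "K / T0 * norm u \<ge> 0" using K0 assms(3) by simp
      have "K * (Ds / T0) * norm u = K / T0 * norm u * Ds" by simp
      also have "\<dots> \<le> K / T0 * norm u * (Ds + DX)" using c DX0 by (intro mult_left_mono) auto
      finally show "K * (Ds / T0) * norm u \<le> K / T0 * norm u * (Ds + DX)" .
      show "spec_norm W * DX \<le> spec_norm W * (Ds + DX)" using sn0 Ds0 by (intro mult_left_mono) auto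
    qed
    also have "\<dots> = (K / T0 * norm u + spec_norm W) * (Ds + DX)" by (simp add: algebra_simps)
    finally show ?thesis unfolding eq .
  qed
  show ?thesis
    unfolding Let_def Ds_def[symmetric] DX_def[symmetric]
    using assms(1,2) key unfolding K_def by (subst Max_le_iff) auto
qed

end
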